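(* Let $\mathcal{A}$ be a finite alphabet, let $X$ be the set of finite sequences (words) over $\mathcal{A}$, and let $\alpha,\beta,\gamma\in\mathbb{R}$. Let $s:X\times X\to\mathbb{R}$ be the scoring function with letter scores $\alpha$ (match), $\beta$ (mismatch), $\gamma$ (insertion/deletion) described in the context. If $\alpha<\min\{\beta,\gamma,0\}$, $\beta\le 2\gamma$ and $\gamma>0$, then $s$ is a strong partial metric on $X$, i.e. for all $x,y,z\in X$: (i) $s(x,x)<s(x,y)$ whenever $x\neq y$; (ii) $s(x,y)=s(y,x)$; (iii) $s(x,y)\le s(x,z)+s(z,y)-s(z,z)$.
   Context: Adjoin a gap symbol $-\notin\mathcal{A}$ and set $\mathcal{A}^\star=\mathcal{A}\cup\{-\}$. An alignment $\mathcal{L}$ of two words $x,y\in X$ is obtained by inserting gap symbols into $x$ and $y$ so that both become sequences $\langle x_i\rangle_{i=1}^m$, $\langle y_i\rangle_{i=1}^m$ over $\mathcal{A}^\star$ of the same length $m$ (deleting the gaps recovers $x$ and $y$). Each position $i$ receives a score $h_{(\mathcal{L},i)}(x,y)$: $\gamma$ if exactly one of $x_i,y_i$ is $-$ (deletion or insertion); $\alpha$ if $x_i=y_i\in\mathcal{A}$ (match); $\beta$ if $x_i,y_i\in\mathcal{A}$ and $x_i\neq y_i$ (mismatch); $0$ if $x_i=y_i=-$ (relay). The score of the alignment is $h_\mathcal{L}(x,y)=\sum_{i=1}^m h_{(\mathcal{L},i)}(x,y)$, and the scoring function is $s(x,y)=\min\{h_\mathcal{L}(x,y)\mid \mathcal{L}\text{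 an alignment of }x\text{ and }y\}$. *)

theory Defs
  imports Main Complex_Main
begin

text \<open>Gap symbol: the extended alphabet A* = A \<union> {-} is modelled as 'a option,
  with None the gap symbol and Some a the letter a.\<close>

definition del_gaps :: "'a option list \<Rightarrow> 'a list" where
  "del_gaps u = map the (filter (\<lambda>c. c \<noteq> None) u)"

text \<open>An alignment of x and y: two equal-length sequences over A* which
  yield x and y after deleting gaps (relay columns allowed).\<close>
definition is_alignment :: "'a list \<Rightarrow> 'a list \<Rightarrow> 'a option list \<Rightarrow> 'a option list \<Rightarrow> bool" where
  "is_alignment x y u v \<longleftrightarrow> length u = length v \<and> del_gaps u = x \<and> del_gaps v = y"

fun col_score :: "real \<Rightarrow> real \<Rightarrow> real \<Rightarrow> 'a option \<Rightarrow> 'a option \<Rightarrow> real" where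
  "col_score \<alpha> \<beta> \<gamma> None None = 0"
| "col_score \<alpha> \<beta> \<gamma> None (Some b) = \<gamma>"
| "col_score \<alpha> \<beta> \<gamma> (Some a) None = \<gamma>"
| "col_score \<alpha> \<beta> \<gamma> (Some a) (Some b) = (if a = b then \<alpha> else \<beta>)"

definition align_score :: "real \<Rightarrow> real \<Rightarrow> real \<Rightarrow> 'a option list \<Rightarrow> 'a option list \<Rightarrow> real" where
  "align_score \<alpha> \<beta> \<gamma> u v = (\<Sum>i<length u. col_score \<alpha> \<beta> \<gamma> (u ! i) (v ! i))"

text \<open>s(x,y) = min of alignment scores (the minimum exists; Inf equals it).\<close>
definition score :: "real \<Rightarrow> real \<Rightarrow> real \<Rightarrow> 'a list \<Rightarrow> 'a list \<Rightarrow> real" where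
  "score \<alpha> \<beta> \<gamma> x y = Inf {align_score \<alpha> \<beta> \<gamma> u v | u v. is_alignment x y u v}"

definition strong_partial_metric :: "('b \<Rightarrow> 'b \<Rightarrow> real) \<Rightarrow> bool" where
  "strong_partial_metric s \<longleftrightarrow>
     (\<forall>x y. x \<noteq> y \<longrightarrow> s x x < s x y) \<and>
     (\<forall>x y. s x y = s y x) \<and>
     (\<forall>x y z. s x y \<le> s x z + s z y - s z z)"

end

theory Submission
  imports Defs
begin

definition sc :: "real \<Rightarrow> real \<Rightarrow> real \<Rightarrow> ('a option \<times> 'a option) list \<Rightarrow> real" where
  "sc \<alpha> \<beta> \<gamma> ps = sum_list (map (\<lambda>(a,b). col_score \<alpha> \<beta> \<gamma> a b) ps)"

lemma sc_simps[simp]: "sc \<alpha> \<beta> \<gamma> [] = 0"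
  "sc \<alpha> \<beta> \<gamma> ((a,b)#ps) = col_score \<alpha> \<beta> \<gamma> a b + sc \<alpha> \<beta> \<gamma> ps"
  by (simp_all add: sc_def)

lemma dg_simps[simp]: "del_gaps [] = []" "del_gaps (None#u) = del_gaps u"
  "del_gaps (Some a#u) = a # del_gaps u" "del_gaps (u @ w) = del_gaps u @ del_gaps w"
  by (simp_all add: del_gaps_def)

lemma dg_cons: "del_gaps (a#u) = (case a of None \<Rightarrow> del_gaps u | Some x \<Rightarrow> x # del_gaps u)"
  by (cases a) auto

lemma dg_some[simp]: "del_gaps (map Some x) = x"
  by (induction x) auto

lemma dg_none[simp]: "del_gaps (replicate n None) = []"
  by (induction n) auto

lemma align_zip: "length u = length v \<Longrightarrow> align_score \<alpha> \<beta> \<gamma> u v = sc \<alpha> \<beta> \<gamma> (zip u v)"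
proof (induction u v rule: list_induct2)
  case Nil
  then show ?case by (simp add: align_score_def)
next
  case (Cons a u b v)
  then show ?case
    by (simp add: align_score_def sum.lessThan_Suc_shift del: sum.lessThan_Suc)
qed

lemma mem_S1: "a \<in> {align_score \<alpha> \<beta> \<gamma> u v | u v. is_alignment x y u v} \<Longrightarrow>
   \<exists>ps. del_gaps (map fst ps) = x \<and> del_gaps (map snd ps) = y \<and> a = sc \<alpha> \<beta> \<gamma> ps"
proof -
  assume "a \<in> {align_score \<alpha> \<beta> \<gamma> u v | u v. is_alignment x y u v}"
  then obtain u v where "length u = length v" "del_gaps u = x" "del_gaps v = y" "a = align_score \<alpha> \<beta> \<gamma> u v"
    unfolding is_alignment_def by blast
  then show ?thesis by (intro exI[of _ "zip u v"]) (simp add: align_zip)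
qed

lemma mem_S2: "del_gaps (map fst ps) = x \<Longrightarrow> del_gaps (map snd ps) = y \<Longrightarrow>
   sc \<alpha> \<beta> \<gamma> ps \<in> {align_score \<alpha> \<beta> \<gamma> u v | u v. is_alignment x y u v}"
  unfolding is_alignment_def
  by (rule CollectI, rule exI[of _ "map fst ps"], rule exI[of _ "map snd ps"])
     (simp add: align_zip zip_map_fst_snd)

fun bad :: "('a option \<times> 'a option) \<Rightarrow> bool" where
  "bad (None, None) = False"
| "bad (Some a, Some b) = (a \<noteq> b)"
| "bad _ = True"

lemma lower:
  assumes "\<alpha> \<le> 0" "\<alpha> \<le> \<beta>" "0 \<le> \<gamma>"
  shows "sc \<alpha> \<beta> \<gamma> ps \<ge> \<alpha> * length (del_gaps (map fst ps)) + min \<gamma> (\<beta> - \<alpha>) * length (filter bad ps)"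
proof (induction ps)
  case Nil
  then show ?case by simp
next
  case (Cons p ps)
  obtain a b where p: "p = (a,b)" by force
  define m where "m = min \<gamma> (\<beta> - \<alpha>)"
  have m: "0 \<le> m" "m \<le> \<gamma>" "m \<le> \<beta> - \<alpha>" using assms unfolding m_def by auto
  show ?case using Cons assms m unfolding p m_def[symmetric]
    by (cases a; cases b) (auto simp: distrib_left)
qed

lemma nobad: "filter bad ps = [] \<Longrightarrow> del_gaps (map fst ps) = del_gaps (map snd ps)"
proof (induction ps)
  case Nil
  then show ?case by simp
next
  case (Cons p ps)
  obtain a b where p: "p = (a,b)" by force
  show ?case using Cons unfolding p
    by (cases a; cases b) (auto split: if_splits)
qed

fun mg :: "('a option \<times> 'a option) list \<Rightarrow> ('a option \<times> 'a option) list \<Rightarrow> ('a option \<times> 'a option \<times> 'a option) list" where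
  "mg ((a,None)#p) q = (a,None,None) # mg p q"
| "mg p ((None,b)#q) = (None,None,b) # mg p q"
| "mg ((a,Some c)#p) ((Some c',b)#q) = (a,Some c,b) # mg p q"
| "mg ((a,Some c)#p) [] = (a,Some c,None) # mg p []"
| "mg [] ((Some c,b)#q) = (None,Some c,b) # mg [] q"
| "mg [] [] = []"

lemma col_sym: "col_score \<alpha> \<beta> \<gamma> a b = col_score \<alpha> \<beta> \<gamma> b a"
  by (cases a; cases b) auto

lemma col_tri:
  assumes "\<alpha> \<le> 0" "\<alpha> \<le> \<beta>" "0 \<le> \<gamma>" "\<beta> \<le> 2 * \<gamma>"
  shows "col_score \<alpha> \<beta> \<gamma> a b \<le> col_score \<alpha> \<beta> \<gamma> a (Some c) + col_score \<alpha> \<beta> \<gamma> (Some c) b - \<alpha>"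
  using assms by (cases a; cases b) auto

lemma mg_prop:
  assumes "\<alpha> \<le> 0" "\<alpha> \<le> \<beta>" "0 \<le> \<gamma>" "\<beta> \<le> 2 * \<gamma>"
  shows "del_gaps (map snd p) = del_gaps (map fst q) \<Longrightarrow>
    del_gaps (map fst (mg p q)) = del_gaps (map fst p) \<and>
    del_gaps (map (snd \<circ> snd) (mg p q)) = del_gaps (map snd q) \<and>
    sc \<alpha> \<beta> \<gamma> (map (\<lambda>(a,c,b). (a,b)) (mg p q)) \<le> sc \<alpha> \<beta> \<gamma> p + sc \<alpha> \<beta> \<gamma> q - \<alpha> * length (del_gaps (map snd p))"
proof (induction p q rule: mg.induct)
  case (3 a c p c' b q)
  have cc: "c = c'" and tl: "del_gaps (map snd p) = del_gaps (map fst q)" using 3(2) by auto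
  note IH = 3(1)[OF tl]
  have h: "col_score \<alpha> \<beta> \<gamma> a b \<le> col_score \<alpha> \<beta> \<gamma> a (Some c) + col_score \<alpha> \<beta> \<gamma> (Some c) b - \<alpha>"
    by (rule col_tri[OF assms])
  have g1: "del_gaps (map fst (mg ((a, Some c) # p) ((Some c', b) # q))) = del_gaps (map fst ((a, Some c) # p))"
    using IH by (cases a) auto
  have g2: "del_gaps (map (snd \<circ> snd) (mg ((a, Some c) # p) ((Some c', b) # q))) = del_gaps (map snd ((Some c', b) # q))"
    using IH by (cases b) (auto simp: comp_def)
  have e1: "sc \<alpha> \<beta> \<gamma> (map (\<lambda>(a,c,b). (a,b)) (mg ((a, Some c) # p) ((Some c', b) # q)))
     = col_score \<alpha> \<beta> \<gamma> a b + sc \<alpha> \<beta> \<gamma> (map (\<lambda>(a,c,b). (a,b)) (mg p q))" by simp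
  have e2: "sc \<alpha> \<beta> \<gamma> ((a, Some c) # p) = col_score \<alpha> \<beta> \<gamma> a (Some c) + sc \<alpha> \<beta> \<gamma> p" by simp
  have e3: "sc \<alpha> \<beta> \<gamma> ((Some c', b) # q) = col_score \<alpha> \<beta> \<gamma> (Some c) b + sc \<alpha> \<beta> \<gamma> q" using cc by simp
  have e4: "\<alpha> * length (del_gaps (map snd ((a, Some c) # p))) = \<alpha> + \<alpha> * length (del_gaps (map snd p))"
    by (simp add: algebra_simps)
  show ?case using g1 g2 e1 e2 e3 e4 IH h by linarith
qed (auto simp: dg_cons split: option.splits)

lemma proj1: "map fst (map (\<lambda>(a,c,b). (a,b)) t) = map fst t"
  by (induction t) auto

lemma proj2: "map snd (map (\<lambda>(a,c,b). (a,b)) t) = map (snd \<circ> snd) t"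
  by (induction t) auto

theorem lemma2p2:
  fixes \<alpha> \<beta> \<gamma> :: real
  assumes "\<alpha> < min \<beta> (min \<gamma> 0)" and "\<beta> \<le> 2 * \<gamma>" and "\<gamma> > 0"
  shows "strong_partial_metric (score \<alpha> \<beta> \<gamma> :: 'a::finite list \<Rightarrow> 'a list \<Rightarrow> real)"
proof -
  have a0: "\<alpha> \<le> 0" and ab: "\<alpha> \<le> \<beta>" and g0: "0 \<le> \<gamma>" and abs: "\<alpha> < \<beta>"
    using assms by auto
  define S where "S x y = {align_score \<alpha> \<beta> \<gamma> u v | u v. is_alignment x y u v}" for x y :: "'a list"
  have sS: "score \<alpha> \<beta> \<gamma> x y = Inf (S x y)" for x y unfolding S_def score_def by simp
  have memS: "\<exists>ps. del_gaps (map fst ps) = x \<and> del_gaps (map snd ps) = y \<and> a = sc \<alpha> \<beta> \<gamma> ps"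
    if "a \<in> S x y" for a x y
    using that unfolding S_def by (rule mem_S1)
  have ne: "S x y \<noteq> {}" for x y
  proof -
    let ?ps = "zip (map Some x @ replicate (length y) None) (replicate (length x) None @ map Some y)"
    have "sc \<alpha> \<beta> \<gamma> ?ps \<in> S x y" unfolding S_def by (rule mem_S2) auto
    then show ?thesis by auto
  qed
  have lb: "a \<ge> \<alpha> * length x + min \<gamma> (\<beta> - \<alpha>) * length (filter bad ps)"
    if "del_gaps (map fst ps) = x" "a = sc \<alpha> \<beta> \<gamma> ps" for a x and ps :: "('a option \<times> 'a option) list"
    using lower[OF a0 ab g0, of ps] that by simp
  have lb2: "a \<ge> \<alpha> * length x" if ain: "a \<in> S x y" for a x y
  proof -
    obtain ps where ps: "del_gaps (map fst ps) = x" "del_gaps (map snd ps) = y" "a = sc \<alpha> \<beta> \<gamma> ps"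
      using memS[OF ain] by blast
    have "0 \<le> min \<gamma> (\<beta> - \<alpha>) * length (filter bad ps)" using g0 ab by simp
    then show ?thesis using lb[OF ps(1) ps(3)] by linarith
  qed
  have bdd: "bdd_below (S x y)" for x y
    unfolding bdd_below_def by (intro exI[of _ "\<alpha> * length x"] ballI lb2)
  have diag: "score \<alpha> \<beta> \<gamma> x x \<le> \<alpha> * length x" for x :: "'a list"
  proof -
    have "sc \<alpha> \<beta> \<gamma> (zip (map Some x) (map Some x)) \<in> S x x" unfolding S_def by (rule mem_S2) auto
    moreover have "sc \<alpha> \<beta> \<gamma> (zip (map Some x) (map Some x)) = \<alpha> * length x"
      by (induction x) (auto simp: algebra_simps)
    ultimately show ?thesis unfolding sS using cInf_lower[OF _ bdd] by metis
  qed
  have P1: "score \<alpha> \<beta> \<gamma> x x < score \<alpha> \<beta> \<gamma> x y" if "x \<noteq> y" for x y :: "'a list"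
  proof -
    have mpos: "0 < min \<gamma> (\<beta> - \<alpha>)" using assms by simp
    have "\<alpha> * length x + min \<gamma> (\<beta> - \<alpha>) \<le> Inf (S x y)"
    proof (rule cInf_greatest[OF ne])
      fix a assume "a \<in> S x y"
      then obtain ps where ps: "del_gaps (map fst ps) = x" "del_gaps (map snd ps) = y" "a = sc \<alpha> \<beta> \<gamma> ps"
        using memS[OF \<open>a \<in> _\<close>] by blast
      have "filter bad ps \<noteq> []" using nobad ps that by metis
      then have "1 \<le> real (length (filter bad ps))" by (cases "filter bad ps") auto
      then have "min \<gamma> (\<beta> - \<alpha>) \<le> min \<gamma> (\<beta> - \<alpha>) * length (filter bad ps)"
        using mpos by (metis mult.right_neutral mult_left_mono less_imp_le)
      then show "\<alpha> * length x + min \<gamma> (\<beta> - \<alpha>) \<le> a" using lb[OF ps(1) ps(3)] by linarith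
    qed
    then show ?thesis using diag[of x] mpos unfolding sS by linarith
  qed
  have P2: "score \<alpha> \<beta> \<gamma> x y = score \<alpha> \<beta> \<gamma> y x" for x y :: "'a list"
  proof -
    have "S x y \<subseteq> S y x" for x y
    proof
      fix a assume "a \<in> S x y"
      then obtain ps where ps: "del_gaps (map fst ps) = x" "del_gaps (map snd ps) = y" "a = sc \<alpha> \<beta> \<gamma> ps"
        using memS[OF \<open>a \<in> _\<close>] by blast
      have "sc \<alpha> \<beta> \<gamma> (map (\<lambda>(a,b). (b,a)) ps) = sc \<alpha> \<beta> \<gamma> ps"
        by (induction ps) (auto simp: col_sym)
      moreover have "sc \<alpha> \<beta> \<gamma> (map (\<lambda>(a,b). (b,a)) ps) \<in> S y x"
        unfolding S_def by (rule mem_S2) (auto simp: ps(1,2)[symmetric] comp_def case_prod_beta)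
      ultimately show "a \<in> S y x" using ps by simp
    qed
    then have "S x y = S y x" by blast
    then show ?thesis unfolding sS by simp
  qed
  have P3: "score \<alpha> \<beta> \<gamma> x y \<le> score \<alpha> \<beta> \<gamma> x z + score \<alpha> \<beta> \<gamma> z y - score \<alpha> \<beta> \<gamma> z z" for x y z :: "'a list"
  proof -
    have "score \<alpha> \<beta> \<gamma> x y \<le> score \<alpha> \<beta> \<gamma> x z + score \<alpha> \<beta> \<gamma> z y - \<alpha> * length z"
    proof (rule field_le_epsilon)
      fix e :: real assume e: "0 < e"
      obtain a1 where a1: "a1 \<in> S x z" "a1 < Inf (S x z) + e/2"
        using cInf_lessD[OF ne[of x z], of "Inf (S x z) + e/2"] e by auto
      obtain a2 where a2: "a2 \<in> S z y" "a2 < Inf (S z y) + e/2"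
        using cInf_lessD[OF ne[of z y], of "Inf (S z y) + e/2"] e by auto
      obtain p where p: "del_gaps (map fst p) = x" "del_gaps (map snd p) = z" "a1 = sc \<alpha> \<beta> \<gamma> p"
        using memS[OF a1(1)] by blast
      obtain q where q: "del_gaps (map fst q) = z" "del_gaps (map snd q) = y" "a2 = sc \<alpha> \<beta> \<gamma> q"
        using memS[OF a2(1)] by blast
      have m: "del_gaps (map fst (mg p q)) = x \<and> del_gaps (map (snd \<circ> snd) (mg p q)) = y \<and>
          sc \<alpha> \<beta> \<gamma> (map (\<lambda>(a,c,b). (a,b)) (mg p q)) \<le> a1 + a2 - \<alpha> * length z"
        using mg_prop[OF a0 ab g0 assms(2), of p q] p q by simp
      have "sc \<alpha> \<beta> \<gamma> (map (\<lambda>(a,c,b). (a,b)) (mg p q)) \<in> S x y"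
        unfolding S_def proof (rule mem_S2)
        show "del_gaps (map fst (map (\<lambda>(a,c,b). (a,b)) (mg p q))) = x"
          unfolding proj1 using m by blast
        show "del_gaps (map snd (map (\<lambda>(a,c,b). (a,b)) (mg p q))) = y"
          unfolding proj2 using m by blast
      qed
      then have "Inf (S x y) \<le> a1 + a2 - \<alpha> * length z"
        using cInf_lower[OF _ bdd] m by (meson order_trans)
      then show "score \<alpha> \<beta> \<gamma> x y \<le> score \<alpha> \<beta> \<gamma> x z + score \<alpha> \<beta> \<gamma> z y - \<alpha> * length z + e"
        using a1(2) a2(2) unfolding sS by linarith
    qed
    then show ?thesis using diag[of z] by linarith
  qed
  show ?thesis unfolding strong_partial_metric_def using P1 P2 P3 by blast
qed

end
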